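(* Let $\nu_2\le\nu_1$ and endow $\mathbb{F}_q^{\nu_1}$ and $\mathbb{F}_q^{\nu_2}$ with the Hamming weight $\operatorname{wt}_H$. If $\psi:\mathbb{F}_q^{\nu_1}\to\mathbb{F}_q^{\nu_2}$ is a surjective weakly row monomial linear map, then $\operatorname{wt}_{\mathrm{quot},\psi}=\operatorname{wt}_H$ on $\mathbb{F}_q^{\nu_2}$.
   Context: A linear map $\psi:\mathbb{F}_q^{\nu_1}\to\mathbb{F}_q^{\nu_2}$ is weakly row monomial if for each standard basis vector $e_i$ of $\mathbb{F}_q^{\nu_1}$, $\psi(e_i)=\lambda_ie'_{j_i}$ for some (possibly zero) $\lambda_i\in\mathbb{F}_q$ and some standard basis vector $e'_{j_i}$ of $\mathbb{F}_q^{\nu_2}$. The quotient weight is $\operatorname{wt}_{\mathrm{quot},\psi}(y)=\min\{\operatorname{wt}_H(x):x\in\psi^{-1}(y)\}$. *)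

theory Defs
  imports "HOL-Analysis.Analysis"
begin

definition hamming_wt :: "'a::zero ^ 'n \<Rightarrow> nat" where
  "hamming_wt x = card {i. x $ i \<noteq> 0}"

definition weakly_row_monomial :: "('a::field ^ 'm \<Rightarrow> 'a ^ 'n) \<Rightarrow> bool" where
  "weakly_row_monomial psi \<longleftrightarrow>
     (\<forall>i. \<exists>(lam::'a) j. psi (axis i 1) = lam *s axis j 1)"

definition quot_wt :: "('a::zero ^ 'm \<Rightarrow> 'b ^ 'n) \<Rightarrow> 'b ^ 'n \<Rightarrow> nat" where
  "quot_wt psi y = Min (hamming_wt ` (psi -` {y}))"

end

theory Submission
  imports Defs
begin

lemma psi_comp:
  fixes psi :: "'a::{field,finite} ^ 'm \<Rightarrow> 'a ^ 'n"
  assumes lin: "Vector_Spaces.linear (*s) (*s) psi"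
    and J: "\<And>i. psi (axis i 1) = lam i *s axis (J i) 1"
  shows "psi x $ j = (\<Sum>i\<in>{i. J i = j}. x $ i * lam i)"
proof -
  have mh: "module_hom (*s) (*s) psi" using lin by (simp add: linear_iff_module_hom)
  have "psi x = psi (\<Sum>i\<in>UNIV. (x$i) *s axis i 1)" by (simp add: basis_expansion)
  also have "\<dots> = (\<Sum>i\<in>UNIV. (x$i) *s psi (axis i 1))"
    by (simp add: module_hom.sum[OF mh] module_hom.scale[OF mh])
  finally have "psi x $ j = (\<Sum>i\<in>UNIV. x $ i * (lam i * (if j = J i then 1 else 0)))"
    by (simp add: J sum_component) (simp add: axis_def mult.assoc)
  also have "\<dots> = (\<Sum>i\<in>UNIV. if J i = j then x $ i * lam i else 0)"
    by (rule sum.cong) auto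
  also have "\<dots> = (\<Sum>i\<in>{i. J i = j}. x $ i * lam i)"
    by (simp add: sum.inter_filter[symmetric])
  finally show ?thesis .
qed

theorem lemma4p1:
  fixes psi :: "'a::{field,finite} ^ 'm \<Rightarrow> 'a ^ 'n"
  assumes "CARD('n) \<le> CARD('m)"
    and "Vector_Spaces.linear (*s) (*s) psi"
    and "surj psi"
    and "weakly_row_monomial psi"
  shows "\<forall>y. quot_wt psi y = hamming_wt y"
proof
  fix y :: "'a ^ 'n"
  obtain lam J where J: "\<And>i. psi (axis i 1) = (lam i::'a) *s axis (J i) 1"
    using assms(4) unfolding weakly_row_monomial_def by metis
  note comp = psi_comp[OF assms(2) J]
  have ex: "\<exists>i. J i = j \<and> lam i \<noteq> 0" for j
  proof (rule ccontr)
    assume nt: "\<not> ?thesis"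
    obtain x where "psi x = axis j 1" using assms(3) by (metis surj_def)
    then have "psi x $ j = 1" by (simp add: axis_def mult.assoc)
    moreover have "psi x $ j = 0" unfolding comp using nt
      by (intro sum.neutral) auto
    ultimately show False by simp
  qed
  define I where "I j = (SOME i. J i = j \<and> lam i \<noteq> 0)" for j
  have I: "J (I j) = j" "lam (I j) \<noteq> 0" for j
    using someI_ex[OF ex[of j]] unfolding I_def by auto
  have injI: "inj I" by (metis I(1) injI)
  have lower: "hamming_wt y \<le> hamming_wt x" if "psi x = y" for x
  proof -
    have "{j. y $ j \<noteq> 0} \<subseteq> J ` {i. x $ i \<noteq> 0}"
    proof
      fix j assume "j \<in> {j. y $ j \<noteq> 0}"
      then have "(\<Sum>i\<in>{i. J i = j}. x $ i * lam i) \<noteq> 0" using comp that by auto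
      then obtain i where "J i = j" "x $ i * lam i \<noteq> 0" by (metis (mono_tags, lifting) mem_Collect_eq sum.neutral)
      then show "j \<in> J ` {i. x $ i \<noteq> 0}" by auto
    qed
    then have "card {j. y $ j \<noteq> 0} \<le> card (J ` {i. x $ i \<noteq> 0})"
      by (intro card_mono) auto
    also have "\<dots> \<le> card {i. x $ i \<noteq> 0}" by (rule card_image_le) auto
    finally show ?thesis unfolding hamming_wt_def .
  qed
  define x0 :: "'a ^ 'm" where "x0 = (\<chi> i. if I (J i) = i then y $ J i / lam i else 0)"
  have px0: "psi x0 = y"
  proof -
    have "psi x0 $ j = y $ j" for j
    proof -
    have "psi x0 $ j = (\<Sum>i\<in>{i. J i = j}. x0 $ i * lam i)" by (rule comp)
    also have "\<dots> = (\<Sum>i\<in>{i. J i = j}. if i = I j then y $ j else 0)"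
      by (rule sum.cong) (auto simp: x0_def I)
    also have "\<dots> = y $ j" using I(1)[of j] by (simp add: sum.delta)
    finally show "psi x0 $ j = y $ j" .
    qed
    then show ?thesis by (simp add: vec_eq_iff)
  qed
  have wx0: "hamming_wt x0 = hamming_wt y"
  proof -
    have "{i. x0 $ i \<noteq> 0} = I ` {j. y $ j \<noteq> 0}"
    proof (intro set_eqI iffI)
      fix i assume "i \<in> {i. x0 $ i \<noteq> 0}"
      then have a: "I (J i) = i" and b: "y $ J i \<noteq> 0" by (auto simp: x0_def split: if_splits)
      show "i \<in> I ` {j. y $ j \<noteq> 0}" using a b by (metis (mono_tags) imageI mem_Collect_eq)
    next
      fix i assume "i \<in> I ` {j. y $ j \<noteq> 0}"
      then obtain j where "i = I j" "y $ j \<noteq> 0" by auto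
      then show "i \<in> {i. x0 $ i \<noteq> 0}" using I[of j] by (simp add: x0_def)
    qed
    then show ?thesis unfolding hamming_wt_def
      using card_image[OF inj_on_subset[OF injI]] by simp
  qed
  have fin: "finite (hamming_wt ` (psi -` {y}))" by simp
  have "hamming_wt x0 \<in> hamming_wt ` (psi -` {y})" using px0 by auto
  then have "Min (hamming_wt ` (psi -` {y})) = hamming_wt y"
    using wx0 lower fin by (intro Min_eqI) auto
  then show "quot_wt psi y = hamming_wt y" unfolding quot_wt_def .
qed

end
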